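(* Let $G$ be a group acting faithfully by homeomorphisms on an infinite Hausdorff space $\mathcal{X}$. Suppose that $U$ is an open subset of $\mathcal{X}$ such that its $R_U$-orbit is equal to its $G$-orbit and is a basis of the topology of $\mathcal{X}$. Then $R_U$ is simple and is contained in every non-trivial normal subgroup of $G$.
   Context: For an open $U\subset\mathcal{X}$, $G_{(U)}$ denotes the subgroup of elements of $G$ acting trivially on $\mathcal{X}\setminus U$, and $R_U$ denotes the normal closure in $G$ of the derived subgroup $G_{(U)}'=[G_{(U)},G_{(U)}]$. The $H$-orbit of $U$ for a subgroup $H$ is $\{hU: h\in H\}$. *)

theory Defs
  imports "HOL-Analysis.Analysis" "HOL-Algebra.Group_Action" "HOL-Algebra.Solvable_Groups"
begin

definition rigid_stab :: "('g, 'm) monoid_scheme \<Rightarrow> 'a topology \<Rightarrow> ('g \<Rightarrow> 'a \<Rightarrow> 'a) \<Rightarrow> 'a set \<Rightarrow> 'g set" where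
  "rigid_stab G X \<phi> U = {g \<in> carrier G. \<forall>x \<in> topspace X - U. \<phi> g x = x}"

definition normal_closure :: "('g, 'm) monoid_scheme \<Rightarrow> 'g set \<Rightarrow> 'g set" where
  "normal_closure G S = generate G (\<Union>g \<in> carrier G. (\<lambda>s. g \<otimes>\<^bsub>G\<^esub> s \<otimes>\<^bsub>G\<^esub> inv\<^bsub>G\<^esub> g) ` S)"

definition R_sub :: "('g, 'm) monoid_scheme \<Rightarrow> 'a topology \<Rightarrow> ('g \<Rightarrow> 'a \<Rightarrow> 'a) \<Rightarrow> 'a set \<Rightarrow> 'g set" where
  "R_sub G X \<phi> U = normal_closure G (derived G (rigid_stab G X \<phi> U))"

definition set_orbit :: "('g \<Rightarrow> 'a \<Rightarrow> 'a) \<Rightarrow> 'g set \<Rightarrow> 'a set \<Rightarrow> 'a set set" where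
  "set_orbit \<phi> H U = {\<phi> h ` U | h. h \<in> H}"

text \<open>Simple group (possibly infinite): non-trivial, only trivial normal subgroups.
  (The library's simple_group requires order > 1, i.e. finiteness.)\<close>
definition simple_grp :: "('g, 'm) monoid_scheme \<Rightarrow> bool" where
  "simple_grp H \<longleftrightarrow> group H \<and> carrier H \<noteq> {\<one>\<^bsub>H\<^esub>} \<and>
     (\<forall>N. N \<lhd> H \<longrightarrow> N = {\<one>\<^bsub>H\<^esub>} \<or> N = carrier H)"

end

theory Submission
  imports Defs
begin

locale rig = group G for G (structure) +
  fixes X :: "'a topology" and \<phi> and U :: "'a set"
  assumes act: "group_action G (topspace X) \<phi>"
    and faith: "inj_on \<phi> (carrier G)"
    and homeo: "\<And>g. g \<in> carrier G \<Longrightarrow> homeomorphic_map X X (\<phi> g)"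
    and haus: "Hausdorff_space X"
    and infT: "infinite (topspace X)"
    and openU: "openin X U"
    and orbeq: "set_orbit \<phi> (R_sub G X \<phi> U) U = set_orbit \<phi> (carrier G) U"
    and basis: "openin X = arbitrary union_of (\<lambda>V. V \<in> set_orbit \<phi> (carrier G) U)"
begin

sublocale A: group_action G "topspace X" \<phi> by (rule act)

abbreviation T where "T \<equiv> topspace X"

definition supp where "supp g = {x \<in> T. \<phi> g x \<noteq> x}"

definition cj where "cj k x = k \<otimes> x \<otimes> inv k"

lemma phi_one: "x \<in> T \<Longrightarrow> \<phi> \<one> x = x"
  by (metis A.id_eq_one restrict_apply')

lemma phi_mem: "g \<in> carrier G \<Longrightarrow> x \<in> T \<Longrightarrow> \<phi> g x \<in> T"
  using A.element_image by blast

lemma phi_mult: "g \<in> carrier G \<Longrightarrow> h \<in> carrier G \<Longrightarrow> x \<in> T \<Longrightarrow> \<phi> (g \<otimes> h) x = \<phi> g (\<phi> h x)"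
  by (rule A.composition_rule)

lemma phi_inv1: "g \<in> carrier G \<Longrightarrow> x \<in> T \<Longrightarrow> \<phi> (inv g) (\<phi> g x) = x"
  by (metis phi_mult inv_closed l_inv phi_one)

lemma phi_inv2: "g \<in> carrier G \<Longrightarrow> x \<in> T \<Longrightarrow> \<phi> g (\<phi> (inv g) x) = x"
  by (metis phi_mult inv_closed r_inv phi_one)

lemma phi_inj: "g \<in> carrier G \<Longrightarrow> x \<in> T \<Longrightarrow> y \<in> T \<Longrightarrow> \<phi> g x = \<phi> g y \<Longrightarrow> x = y"
  by (metis phi_inv1)

lemma eq_onT: assumes "g \<in> carrier G" "h \<in> carrier G" "\<And>x. x \<in> T \<Longrightarrow> \<phi> g x = \<phi> h x"
  shows "g = h"
proof -
  have "\<phi> g \<in> extensional T" "\<phi> h \<in> extensional T"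
    using A.bij_prop0 assms(1,2) by (auto simp: Bij_def)
  then have "\<phi> g = \<phi> h" using assms(3) by (rule extensionalityI)
  then show ?thesis using faith assms(1,2) by (auto dest: inj_onD)
qed

lemma supp_empty: "g \<in> carrier G \<Longrightarrow> supp g = {} \<Longrightarrow> g = \<one>"
  by (rule eq_onT) (auto simp: supp_def phi_one)

lemma supp_one: "supp \<one> = {}"
  by (auto simp: supp_def phi_one)

lemma supp_stable: "g \<in> carrier G \<Longrightarrow> x \<in> supp g \<Longrightarrow> \<phi> g x \<in> supp g"
  unfolding supp_def using phi_mem phi_inj by blast

lemma supp_inv: "g \<in> carrier G \<Longrightarrow> supp (inv g) = supp g"
  unfolding supp_def by (metis phi_inv1 phi_inv2)

lemma supp_mult: "g \<in> carrier G \<Longrightarrow> h \<in> carrier G \<Longrightarrow> supp (g \<otimes> h) \<subseteq> supp g \<union> supp h"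
  unfolding supp_def using phi_mult by auto

lemma supp_cj: assumes "k \<in> carrier G" "a \<in> carrier G" shows "supp (cj k a) \<subseteq> \<phi> k ` supp a"
proof
  fix z assume z: "z \<in> supp (cj k a)"
  hence zT: "z \<in> T" by (simp add: supp_def)
  define w where "w = \<phi> (inv k) z"
  have wT: "w \<in> T" using phi_mem zT assms by (simp add: w_def)
  have zw: "z = \<phi> k w" using phi_inv2 assms zT by (simp add: w_def)
  have "\<phi> (cj k a) z = \<phi> k (\<phi> a w)"
    using assms zT by (simp add: cj_def phi_mult phi_mem w_def)
  hence "\<phi> a w \<noteq> w" using z zw by (auto simp: supp_def)
  thus "z \<in> \<phi> k ` supp a" using zw wT by (auto simp: supp_def)
qed

lemma commute: assumes "a \<in> carrier G" "b \<in> carrier G" "supp a \<inter> supp b = {}"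
  shows "a \<otimes> b = b \<otimes> a"
proof (rule eq_onT)
  fix x assume x: "x \<in> T"
  show "\<phi> (a \<otimes> b) x = \<phi> (b \<otimes> a) x"
  proof (cases "x \<in> supp a")
    case True
    then have "\<phi> a x \<in> supp a" using supp_stable assms by blast
    moreover have "x \<notin> supp b" using True assms by blast
    ultimately have "\<phi> b (\<phi> a x) = \<phi> a x" "\<phi> b x = x" using assms(3) x phi_mem assms(1)
      by (auto simp: supp_def)
    then show ?thesis using assms x by (simp add: phi_mult)
  next
    case False
    then have ax: "\<phi> a x = x" using x by (auto simp: supp_def)
    show ?thesis
    proof (cases "x \<in> supp b")
      case True
      then have "\<phi> b x \<in> supp b" using supp_stable assms by blast
      then have "\<phi> b x \<notin> supp a" using assms(3) by blast
      then have "\<phi> a (\<phi> b x) = \<phi> b x" using assms(2) x phi_mem by (auto simp: supp_def)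
      then show ?thesis using assms x ax by (simp add: phi_mult)
    next
      case False
      then show ?thesis using assms x ax by (auto simp: phi_mult supp_def phi_mem)
    qed
  qed
qed (use assms in auto)

lemma invc1 [simp]: "x \<in> carrier G \<Longrightarrow> y \<in> carrier G \<Longrightarrow> inv x \<otimes> (x \<otimes> y) = y"
  by (simp add: m_assoc[symmetric])

lemma invc2 [simp]: "x \<in> carrier G \<Longrightarrow> y \<in> carrier G \<Longrightarrow> x \<otimes> (inv x \<otimes> y) = y"
  by (simp add: m_assoc[symmetric])

lemma cj_closed [simp]: "k \<in> carrier G \<Longrightarrow> x \<in> carrier G \<Longrightarrow> cj k x \<in> carrier G"
  by (simp add: cj_def)

lemma cj_hom: "k \<in> carrier G \<Longrightarrow> group_hom G G (cj k)"
  apply (rule group_hom.intro, rule group_axioms, rule group_axioms)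
  apply (rule group_hom_axioms.intro)
  apply (rule homI)
   apply (simp add: cj_def m_assoc)+
  done

lemma cj_mult: "k \<in> carrier G \<Longrightarrow> l \<in> carrier G \<Longrightarrow> x \<in> carrier G \<Longrightarrow> cj (k \<otimes> l) x = cj k (cj l x)"
  by (simp add: cj_def m_assoc inv_mult_group)

lemma cj_inv_cancel [simp]: "k \<in> carrier G \<Longrightarrow> x \<in> carrier G \<Longrightarrow> cj (inv k) (cj k x) = x"
  by (simp add: cj_def m_assoc)

lemma cj_inv_cancel2 [simp]: "k \<in> carrier G \<Longrightarrow> x \<in> carrier G \<Longrightarrow> cj k (cj (inv k) x) = x"
  by (simp add: cj_def m_assoc)

lemma cj_one [simp]: "k \<in> carrier G \<Longrightarrow> cj k \<one> = \<one>"
  by (simp add: cj_def)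

lemma cj_by_one [simp]: "x \<in> carrier G \<Longrightarrow> cj \<one> x = x"
  by (simp add: cj_def)

lemma UT: "U \<subseteq> T" using openU by (rule openin_subset)

lemma stab_iff: "g \<in> rigid_stab G X \<phi> V \<longleftrightarrow> g \<in> carrier G \<and> supp g \<subseteq> V"
  by (auto simp: rigid_stab_def supp_def)

lemma stab_carrier: "rigid_stab G X \<phi> V \<subseteq> carrier G"
  by (auto simp: stab_iff)

lemma stab_sub: "subgroup (rigid_stab G X \<phi> V) G"
proof (rule subgroup.intro)
  show "rigid_stab G X \<phi> V \<subseteq> carrier G" by (rule stab_carrier)
  show "\<And>x y. x \<in> rigid_stab G X \<phi> V \<Longrightarrow> y \<in> rigid_stab G X \<phi> V \<Longrightarrow> x \<otimes> y \<in> rigid_stab G X \<phi> V"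
    using supp_mult by (fastforce simp: stab_iff)
  show "\<one> \<in> rigid_stab G X \<phi> V" by (simp add: stab_iff supp_one)
  show "\<And>x. x \<in> rigid_stab G X \<phi> V \<Longrightarrow> inv x \<in> rigid_stab G X \<phi> V"
    by (simp add: stab_iff supp_inv)
qed

lemma stab_mono: "V \<subseteq> V' \<Longrightarrow> rigid_stab G X \<phi> V \<subseteq> rigid_stab G X \<phi> V'"
  by (meson order_trans stab_iff subsetI)

abbreviation D where "D V \<equiv> derived G (rigid_stab G X \<phi> V)"

lemma D_stab: "D V \<subseteq> rigid_stab G X \<phi> V"
  by (rule derived_incl[OF subset_refl stab_sub])

lemma D_carrier: "D V \<subseteq> carrier G"
  using D_stab stab_carrier by blast

lemma D_sub: "subgroup (D V) G"
  by (rule derived_is_subgroup[OF stab_carrier])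

lemma stab_cj: "k \<in> carrier G \<Longrightarrow> cj k ` rigid_stab G X \<phi> V \<subseteq> rigid_stab G X \<phi> (\<phi> k ` V)"
  using supp_cj by (fastforce simp: stab_iff)

lemma D_cj: assumes k: "k \<in> carrier G" shows "cj k ` D V \<subseteq> D (\<phi> k ` V)"
proof -
  interpret h: group_hom G G "cj k" by (rule cj_hom[OF k])
  have "cj k ` D V = derived G (cj k ` rigid_stab G X \<phi> V)"
    by (rule h.derived_img[OF stab_carrier, symmetric])
  also have "\<dots> \<subseteq> D (\<phi> k ` V)" by (rule mono_derived[OF stab_cj[OF k]])
  finally show ?thesis .
qed

lemma img_inv: "k \<in> carrier G \<Longrightarrow> V \<subseteq> T \<Longrightarrow> \<phi> (inv k) ` \<phi> k ` V = V"
  by (auto simp: image_image phi_inv1 subset_iff)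

lemma D_cj_eq: assumes k: "k \<in> carrier G" and V: "V \<subseteq> T" shows "D (\<phi> k ` V) = cj k ` D V"
proof
  show "cj k ` D V \<subseteq> D (\<phi> k ` V)" by (rule D_cj[OF k])
  show "D (\<phi> k ` V) \<subseteq> cj k ` D V"
  proof
    fix y assume y: "y \<in> D (\<phi> k ` V)"
    hence "cj (inv k) y \<in> D (\<phi> (inv k) ` \<phi> k ` V)" using D_cj[of "inv k"] k by blast
    hence "cj (inv k) y \<in> D V" using img_inv[OF k V] by simp
    moreover have "y = cj k (cj (inv k) y)" using y D_carrier k by (metis cj_inv_cancel2 subsetD)
    ultimately show "y \<in> cj k ` D V" by blast
  qed
qed

lemma cj_comm: assumes "k \<in> carrier G" "a \<in> carrier G" "b \<in> carrier G"
  shows "cj k (a \<otimes> b \<otimes> inv a \<otimes> inv b) = cj k a \<otimes> cj k b \<otimes> inv (cj k a) \<otimes> inv (cj k b)"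
proof -
  interpret h: group_hom G G "cj k" by (rule cj_hom[OF assms(1)])
  show ?thesis using assms by (simp add: h.hom_mult h.hom_inv)
qed

lemma DS_cj: assumes k: "k \<in> carrier G"
  shows "cj k ` derived_set G (D V) \<subseteq> derived_set G (D (\<phi> k ` V))"
proof
  fix z assume "z \<in> cj k ` derived_set G (D V)"
  then obtain a b where ab: "a \<in> D V" "b \<in> D V" "z = cj k (a \<otimes> b \<otimes> inv a \<otimes> inv b)" by blast
  have "a \<in> carrier G" "b \<in> carrier G" using ab D_carrier by auto
  hence "z = cj k a \<otimes> cj k b \<otimes> inv (cj k a) \<otimes> inv (cj k b)" using ab k cj_comm by simp
  moreover have "cj k a \<in> D (\<phi> k ` V)" "cj k b \<in> D (\<phi> k ` V)" using D_cj[OF k] ab by auto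
  ultimately show "z \<in> derived_set G (D (\<phi> k ` V))" by blast
qed

abbreviation R where "R \<equiv> R_sub G X \<phi> U"

lemma R_eq: "R = generate G (\<Union>g\<in>carrier G. cj g ` D U)"
  by (simp add: R_sub_def normal_closure_def cj_def)

lemma gen_carrier: "(\<Union>g\<in>carrier G. cj g ` D U) \<subseteq> carrier G"
  using D_carrier cj_closed by blast

lemma R_normal: "R \<lhd> G"
  unfolding R_eq
proof (rule normal_generateI[OF gen_carrier])
  fix h g assume h: "h \<in> (\<Union>g\<in>carrier G. cj g ` D U)" and g: "g \<in> carrier G"
  then obtain g' y where "g' \<in> carrier G" "y \<in> D U" "h = cj g' y" by blast
  moreover have "y \<in> carrier G" using \<open>y \<in> D U\<close> D_carrier by blast
  ultimately have "g \<otimes> h \<otimes> inv g = cj (g \<otimes> g') y" using g by (simp add: cj_mult cj_def[of g])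
  thus "g \<otimes> h \<otimes> inv g \<in> (\<Union>g\<in>carrier G. cj g ` D U)" using g \<open>g' \<in> carrier G\<close> \<open>y \<in> D U\<close> by blast
qed

lemma R_sub: "subgroup R G" using R_normal normal_imp_subgroup by blast

lemma R_min: assumes "subgroup N G" "\<And>g y. g \<in> carrier G \<Longrightarrow> y \<in> D U \<Longrightarrow> cj g y \<in> N"
  shows "R \<subseteq> N"
  unfolding R_eq by (rule generate_subgroup_incl) (use assms in auto)

lemma D_sub_R: assumes k: "k \<in> carrier G" shows "D (\<phi> k ` U) \<subseteq> R"
  unfolding D_cj_eq[OF k UT] R_eq using k by (auto intro: generate.incl)

lemma sep: assumes g: "g \<in> carrier G" and y: "y \<in> T" "\<phi> g y \<noteq> y"
  shows "\<exists>W. openin X W \<and> y \<in> W \<and> W \<inter> \<phi> g ` W = {}"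
proof -
  have "\<phi> g y \<in> T" using phi_mem g y by blast
  then obtain A B where AB: "openin X A" "openin X B" "y \<in> A" "\<phi> g y \<in> B" "disjnt A B"
    using haus y unfolding Hausdorff_space_def by metis
  have cm: "continuous_map X X (\<phi> g)" using homeo[OF g] homeomorphic_imp_continuous_map by blast
  define W where "W = A \<inter> {x \<in> T. \<phi> g x \<in> B}"
  have "openin X W" unfolding W_def using AB(1) openin_continuous_map_preimage[OF cm AB(2)] by blast
  moreover have "y \<in> W" using AB y by (simp add: W_def)
  moreover have "W \<inter> \<phi> g ` W = {}" using AB(5) by (auto simp: W_def disjnt_def)
  ultimately show ?thesis by blast
qed

lemma bas: assumes "openin X W" "x \<in> W" shows "\<exists>k\<in>carrier G. x \<in> \<phi> k ` U \<and> \<phi> k ` U \<subseteq> W"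
proof -
  have "(arbitrary union_of (\<lambda>V. V \<in> set_orbit \<phi> (carrier G) U)) W" using assms(1) basis by metis
  then obtain F where F: "F \<subseteq> set_orbit \<phi> (carrier G) U" "\<Union>F = W"
    by (auto simp: union_of_def arbitrary_def)
  then obtain V where "V \<in> F" "x \<in> V" using assms(2) by blast
  then obtain k where "k \<in> carrier G" "V = \<phi> k ` U" using F(1) by (auto simp: set_orbit_def)
  thus ?thesis using \<open>V \<in> F\<close> \<open>x \<in> V\<close> F(2) by blast
qed

lemma K: assumes H: "subgroup H G" and N: "subgroup N G" "N \<subseteq> H"
    and nc: "\<And>h n. h \<in> H \<Longrightarrow> n \<in> N \<Longrightarrow> h \<otimes> n \<otimes> inv h \<in> N"
    and g: "g \<in> N" and W: "W \<inter> \<phi> g ` W = {}"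
    and ab: "a \<in> H" "b \<in> H" "supp a \<subseteq> W" "supp b \<subseteq> W"
  shows "a \<otimes> b \<otimes> inv a \<otimes> inv b \<in> N"
proof -
  have gc: "g \<in> carrier G" using subgroup.subset[OF N(1)] g by blast
  have ac: "a \<in> carrier G" "b \<in> carrier G" using subgroup.subset[OF H] ab(1,2) by blast+
  define c where "c = g \<otimes> inv b \<otimes> inv g"
  have cc: "c \<in> carrier G" using gc ac by (simp add: c_def)
  have "supp c \<subseteq> \<phi> g ` supp (inv b)" using supp_cj[of g "inv b"] gc ac by (simp add: cj_def c_def)
  also have "\<dots> \<subseteq> \<phi> g ` W" using supp_inv ac ab by auto
  finally have sc: "supp c \<subseteq> \<phi> g ` W" .
  have "supp (inv a) \<inter> supp c \<subseteq> W \<inter> \<phi> g ` W"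
    using supp_inv[OF ac(1)] ab(3) sc by (intro Int_mono) auto
  hence "supp (inv a) \<inter> supp c = {}" using W by (simp only: subset_empty)
  hence ca: "c \<otimes> inv a = inv a \<otimes> c" using commute[OF inv_closed[OF ac(1)] cc] by simp
  have bg: "b \<otimes> g \<otimes> inv b \<in> N" using nc ab g by blast
  have "b \<otimes> c = (b \<otimes> g \<otimes> inv b) \<otimes> inv g" using gc ac by (simp add: c_def m_assoc)
  hence n: "b \<otimes> c \<in> N" using bg g N(1) by (simp add: subgroup.m_closed subgroup.m_inv_closed)
  have bcc: "b \<otimes> c \<in> carrier G" using ac cc by simp
  have "a \<otimes> (b \<otimes> c) \<otimes> inv a \<in> N" using nc ab n by blast
  hence "a \<otimes> (b \<otimes> c) \<otimes> inv a \<otimes> inv (b \<otimes> c) \<in> N" using n N(1) by (simp add: subgroup.m_closed subgroup.m_inv_closed)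
  moreover have "a \<otimes> (b \<otimes> c) \<otimes> inv a \<otimes> inv (b \<otimes> c) = a \<otimes> b \<otimes> (c \<otimes> inv a) \<otimes> inv c \<otimes> inv b"
    using ac cc by (simp add: m_assoc inv_mult_group)
  also have "\<dots> = a \<otimes> b \<otimes> (inv a \<otimes> c) \<otimes> inv c \<otimes> inv b" using ca by simp
  also have "\<dots> = a \<otimes> b \<otimes> inv a \<otimes> inv b" using ac cc by (simp add: m_assoc)
  ultimately show ?thesis by simp
qed

lemma moves: assumes "g \<in> carrier G" "g \<noteq> \<one>" obtains y where "y \<in> T" "\<phi> g y \<noteq> y"
  using supp_empty assms by (auto simp: supp_def)

lemma part2: assumes NG: "N \<lhd> G" and ne: "N \<noteq> {\<one>}" shows "R \<subseteq> N"
proof -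
  have Ns: "subgroup N G" using NG normal_imp_subgroup by blast
  have "\<one> \<in> N" using Ns subgroup.one_closed by blast
  then obtain g where g: "g \<in> N" "g \<noteq> \<one>" using ne by blast
  have gc: "g \<in> carrier G" using subgroup.subset[OF Ns] g by blast
  obtain y where y: "y \<in> T" "\<phi> g y \<noteq> y" using moves gc g by blast
  obtain W where W: "openin X W" "y \<in> W" "W \<inter> \<phi> g ` W = {}" using sep gc y by blast
  obtain k where k: "k \<in> carrier G" "y \<in> \<phi> k ` U" "\<phi> k ` U \<subseteq> W" using bas W by blast
  have "derived_set G (rigid_stab G X \<phi> (\<phi> k ` U)) \<subseteq> N"
  proof
    fix z assume "z \<in> derived_set G (rigid_stab G X \<phi> (\<phi> k ` U))"
    then obtain a b where ab: "a \<in> rigid_stab G X \<phi> (\<phi> k ` U)" "b \<in> rigid_stab G X \<phi> (\<phi> k ` U)"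
      "z = a \<otimes> b \<otimes> inv a \<otimes> inv b" by blast
    show "z \<in> N" unfolding ab(3)
      by (rule K[OF subgroup_self Ns subgroup.subset[OF Ns] _ g(1) W(3)])
        (use ab k NG normal.inv_op_closed2 stab_iff in auto)
  qed
  hence DN: "D (\<phi> k ` U) \<subseteq> N" unfolding derived_def by (rule generate_subgroup_incl[OF _ Ns])
  show ?thesis
  proof (rule R_min[OF Ns])
    fix g' y' assume g': "g' \<in> carrier G" and y': "y' \<in> D U"
    have y'c: "y' \<in> carrier G" using y' D_carrier by blast
    have "cj k y' \<in> N" using D_cj[OF k(1)] y' DN by blast
    moreover have "cj g' y' = cj (g' \<otimes> inv k) (cj k y')"
      using g' k y'c by (simp add: cj_mult[symmetric] m_assoc)
    moreover have "cj (g' \<otimes> inv k) (cj k y') \<in> N"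
      unfolding cj_def[of "g' \<otimes> inv k"] by (rule normal.inv_op_closed2[OF NG]) (use g' k(1) \<open>cj k y' \<in> N\<close> in auto)
    ultimately show "cj g' y' \<in> N" by simp
  qed
qed

lemma moveU: "\<exists>h\<in>carrier G. \<phi> h ` U \<noteq> U"
proof (rule ccontr)
  assume "\<not> ?thesis"
  hence all: "\<And>h. h \<in> carrier G \<Longrightarrow> \<phi> h ` U = U" by blast
  have orb: "set_orbit \<phi> (carrier G) U = {U}"
    using all one_closed by (auto simp: set_orbit_def)
  have opn: "A = {} \<or> A = U" if "openin X A" for A
  proof -
    have "(arbitrary union_of (\<lambda>V. V \<in> set_orbit \<phi> (carrier G) U)) A" using that basis by metis
    then obtain F where F: "F \<subseteq> {U}" "\<Union>F = A"
      by (auto simp: union_of_def arbitrary_def orb)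
    thus ?thesis by blast
  qed
  obtain x where x: "x \<in> T" using infT by (metis finite.emptyI ex_in_conv)
  have "infinite (T - {x})" using infT by simp
  then obtain y where y: "y \<in> T" "y \<noteq> x" by (metis Diff_iff finite.emptyI ex_in_conv singletonI)
  then obtain A B where AB: "openin X A" "openin X B" "x \<in> A" "y \<in> B" "disjnt A B"
    using haus x unfolding Hausdorff_space_def by metis
  have "A = U" "B = U" using opn AB by blast+
  thus False using AB by (auto simp: disjnt_def)
qed

lemma R_ne: "R \<noteq> {\<one>}"
proof
  assume R1: "R = {\<one>}"
  obtain h where h: "h \<in> carrier G" "\<phi> h ` U \<noteq> U" using moveU by blast
  have "\<phi> h ` U \<in> set_orbit \<phi> R U" using orbeq h by (auto simp: set_orbit_def)
  then obtain r where "r \<in> R" "\<phi> r ` U = \<phi> h ` U" by (auto simp: set_orbit_def)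
  hence "\<phi> \<one> ` U = \<phi> h ` U" using R1 by simp
  moreover have "\<phi> \<one> ` U = U" using UT phi_one by (auto simp: subset_iff image_iff)
  ultimately show False using h by simp
qed

lemma DU_ne: "\<exists>e\<in>D U. e \<noteq> \<one>"
proof (rule ccontr)
  assume "\<not> ?thesis"
  hence D1: "D U \<subseteq> {\<one>}" by blast
  have "R \<subseteq> {\<one>}" by (rule R_min[OF triv_subgroup]) (use D1 in auto)
  moreover have "\<one> \<in> R" using R_sub subgroup.one_closed by blast
  ultimately show False using R_ne by blast
qed

lemma DSU_ne: "\<exists>w\<in>derived_set G (D U). w \<noteq> \<one>"
proof -
  obtain e where e: "e \<in> D U" "e \<noteq> \<one>" using DU_ne by blast
  have ec: "e \<in> carrier G" using e D_carrier by blast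
  obtain y where y: "y \<in> T" "\<phi> e y \<noteq> y" using moves ec e by blast
  have "supp e \<subseteq> U" using e D_stab stab_iff by blast
  hence yU: "y \<in> U" using y by (auto simp: supp_def)
  obtain W where W: "openin X W" "y \<in> W" "W \<inter> \<phi> e ` W = {}" using sep ec y by blast
  have "openin X (W \<inter> U)" using W openU by blast
  then obtain k where k: "k \<in> carrier G" "y \<in> \<phi> k ` U" "\<phi> k ` U \<subseteq> W \<inter> U" using bas W yU by blast
  define a where "a = cj k e"
  have aD: "a \<in> D (\<phi> k ` U)" using D_cj[OF k(1)] e by (auto simp: a_def)
  have "D (\<phi> k ` U) \<subseteq> D U" using k by (intro mono_derived stab_mono) auto
  hence aDU: "a \<in> D U" using aD by blast
  have ac: "a \<in> carrier G" using k ec by (simp add: a_def)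
  have "a \<noteq> \<one>"
  proof
    assume "a = \<one>"
    hence "cj (inv k) a = \<one>" using k by simp
    thus False using e ec k by (simp add: a_def)
  qed
  then obtain z where z: "z \<in> T" "\<phi> a z \<noteq> z" using moves ac by blast
  have "supp a \<subseteq> \<phi> k ` U" using aD D_stab stab_iff by blast
  hence zW: "z \<in> W" using z k by (auto simp: supp_def)
  define w where "w = a \<otimes> e \<otimes> inv a \<otimes> inv e"
  have wD: "w \<in> derived_set G (D U)" using aDU e by (auto simp: w_def)
  have weq: "w = a \<otimes> cj e (inv a)" using ac ec by (simp add: w_def cj_def m_assoc)
  have "supp (cj e (inv a)) \<subseteq> \<phi> e ` supp (inv a)" using supp_cj ec ac by simp
  also have "\<dots> \<subseteq> \<phi> e ` W"
  proof -
    have "supp a \<subseteq> W" using \<open>supp a \<subseteq> \<phi> k ` U\<close> k(3) by blast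
    thus ?thesis using supp_inv[OF ac] by (simp add: image_mono)
  qed
  finally have "z \<notin> supp (cj e (inv a))" using zW W(3) by blast
  hence "\<phi> (cj e (inv a)) z = z" using z by (simp add: supp_def)
  hence "\<phi> w z = \<phi> a z" using weq ac ec z by (simp add: phi_mult)
  hence "w \<noteq> \<one>" using z phi_one by auto
  thus ?thesis using wD by blast
qed

lemma part1: assumes NR: "N \<lhd> G\<lparr>carrier := R\<rparr>" and ne: "N \<noteq> {\<one>}" shows "N = R"
proof -
  have Ns': "subgroup N (G\<lparr>carrier := R\<rparr>)" using NR normal_imp_subgroup by blast
  have Ns: "subgroup N G" by (rule incl_subgroup[OF R_sub Ns'])
  have NsubR: "N \<subseteq> R" using subgroup.subset[OF Ns'] by simp
  have nc: "h \<otimes> n \<otimes> inv h \<in> N" if "h \<in> R" "n \<in> N" for h n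
  proof -
    have "h \<otimes>\<^bsub>G\<lparr>carrier := R\<rparr>\<^esub> n \<otimes>\<^bsub>G\<lparr>carrier := R\<rparr>\<^esub> inv\<^bsub>G\<lparr>carrier := R\<rparr>\<^esub> h \<in> N"
      using normal.inv_op_closed2[OF NR] that by simp
    thus ?thesis using m_inv_consistent[OF R_sub that(1)] by simp
  qed
  have "\<one> \<in> N" using Ns subgroup.one_closed by blast
  then obtain g where g: "g \<in> N" "g \<noteq> \<one>" using ne by blast
  have gc: "g \<in> carrier G" using subgroup.subset[OF Ns] g by blast
  obtain y where y: "y \<in> T" "\<phi> g y \<noteq> y" using moves gc g by blast
  obtain W where W: "openin X W" "y \<in> W" "W \<inter> \<phi> g ` W = {}" using sep gc y by blast
  obtain k where k: "k \<in> carrier G" "y \<in> \<phi> k ` U" "\<phi> k ` U \<subseteq> W" using bas W by blast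
  have "\<phi> k ` U \<in> set_orbit \<phi> R U" using orbeq k by (auto simp: set_orbit_def)
  then obtain r where r: "r \<in> R" "\<phi> r ` U = \<phi> k ` U" by (auto simp: set_orbit_def)
  have rc: "r \<in> carrier G" using subgroup.subset[OF R_sub] r by blast
  have DSN: "derived_set G (D (\<phi> r ` U)) \<subseteq> N"
  proof
    fix z assume "z \<in> derived_set G (D (\<phi> r ` U))"
    then obtain a b where ab: "a \<in> D (\<phi> r ` U)" "b \<in> D (\<phi> r ` U)"
      "z = a \<otimes> b \<otimes> inv a \<otimes> inv b" by blast
    have "a \<in> R" "b \<in> R" using ab D_sub_R[OF rc] by auto
    moreover have "supp a \<subseteq> W" "supp b \<subseteq> W" using ab D_stab stab_iff r k by blast+
    ultimately show "z \<in> N" unfolding ab(3)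
      by (intro K[OF R_sub Ns NsubR nc g(1) W(3)])
  qed
  have conjN: "cj g' z \<in> N" if g': "g' \<in> carrier G" and z: "z \<in> derived_set G (D U)" for g' z
  proof -
    have zc: "z \<in> carrier G" using z derived_set_in_carrier[OF D_carrier] by blast
    have "\<phi> g' ` U \<in> set_orbit \<phi> R U" using orbeq g' by (auto simp: set_orbit_def)
    then obtain r' where r': "r' \<in> R" "\<phi> r' ` U = \<phi> g' ` U" by (auto simp: set_orbit_def)
    have r'c: "r' \<in> carrier G" using subgroup.subset[OF R_sub] r' by blast
    define s where "s = inv r' \<otimes> g'"
    have sc: "s \<in> carrier G" using r'c g' by (simp add: s_def)
    have "\<phi> s ` U = \<phi> (inv r') ` \<phi> g' ` U"
      using UT r'c g' by (auto simp: s_def phi_mult image_iff subset_iff)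
    also have "\<dots> = U" using r' img_inv[OF r'c UT] by simp
    finally have sU: "\<phi> s ` U = U" .
    have "cj s z \<in> derived_set G (D (\<phi> s ` U))" using DS_cj[OF sc, of U] z by blast
    hence "cj s z \<in> derived_set G (D U)" using sU by simp
    hence "cj r (cj s z) \<in> derived_set G (D (\<phi> r ` U))" using DS_cj[OF rc, of U] by blast
    hence inN: "cj r (cj s z) \<in> N" using DSN by blast
    have "r' \<otimes> inv r \<in> R" using r r' R_sub by (simp add: subgroup.m_closed subgroup.m_inv_closed)
    hence "cj (r' \<otimes> inv r) (cj r (cj s z)) \<in> N" using nc inN by (simp add: cj_def)
    moreover have "cj (r' \<otimes> inv r) (cj r (cj s z)) = cj g' z"
      using rc r'c sc zc g' by (simp add: cj_mult[symmetric] m_assoc s_def)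
    ultimately show ?thesis by simp
  qed
  define Q where "Q = generate G (\<Union>g\<in>carrier G. cj g ` derived_set G (D U))"
  have Qc: "(\<Union>g\<in>carrier G. cj g ` derived_set G (D U)) \<subseteq> carrier G"
    using derived_set_in_carrier[OF D_carrier] cj_closed by blast
  have QN: "Q \<subseteq> N" unfolding Q_def by (rule generate_subgroup_incl[OF _ Ns]) (use conjN in auto)
  have Qnorm: "Q \<lhd> G"
    unfolding Q_def
  proof (rule normal_generateI[OF Qc])
    fix h g assume h: "h \<in> (\<Union>g\<in>carrier G. cj g ` derived_set G (D U))" and g: "g \<in> carrier G"
    then obtain g' y where gy: "g' \<in> carrier G" "y \<in> derived_set G (D U)" "h = cj g' y" by blast
    moreover have "y \<in> carrier G" using gy(2) derived_set_in_carrier[OF D_carrier] by blast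
    ultimately have "g \<otimes> h \<otimes> inv g = cj (g \<otimes> g') y" using g by (simp add: cj_mult cj_def[of g])
    thus "g \<otimes> h \<otimes> inv g \<in> (\<Union>g\<in>carrier G. cj g ` derived_set G (D U))" using g gy by blast
  qed
  obtain w where w: "w \<in> derived_set G (D U)" "w \<noteq> \<one>" using DSU_ne by blast
  have "w \<in> carrier G" using w derived_set_in_carrier[OF D_carrier] by blast
  hence "w = cj \<one> w" by simp
  hence "w \<in> Q" unfolding Q_def using w(1) by (intro generate.incl) blast
  hence "Q \<noteq> {\<one>}" using w by blast
  hence "R \<subseteq> Q" using part2 Qnorm by blast
  thus ?thesis using QN NsubR by blast
qed

end

theorem proposition4p3:
  fixes G :: "('g, 'm) monoid_scheme" and X :: "'a topology"
    and \<phi> :: "'g \<Rightarrow> 'a \<Rightarrow> 'a" and U :: "'a set"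
  assumes "group G"
    and "group_action G (topspace X) \<phi>"
    and "inj_on \<phi> (carrier G)"
    and "\<And>g. g \<in> carrier G \<Longrightarrow> homeomorphic_map X X (\<phi> g)"
    and "Hausdorff_space X"
    and "infinite (topspace X)"
    and "openin X U"
    and "set_orbit \<phi> (R_sub G X \<phi> U) U = set_orbit \<phi> (carrier G) U"
    and "openin X = arbitrary union_of (\<lambda>V. V \<in> set_orbit \<phi> (carrier G) U)"
  shows "simple_grp (G\<lparr>carrier := R_sub G X \<phi> U\<rparr>) \<and>
         (\<forall>N. N \<lhd> G \<and> N \<noteq> {\<one>\<^bsub>G\<^esub>} \<longrightarrow> R_sub G X \<phi> U \<subseteq> N)"
proof -
  interpret rig G X \<phi> U
    unfolding rig_def rig_axioms_def using assms by blast
  have "simple_grp (G\<lparr>carrier := R\<rparr>)"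
    unfolding simple_grp_def
    using subgroup.subgroup_is_group[OF R_sub is_group] R_ne part1 by auto
  thus ?thesis using part2 by blast
qed

end
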